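(* Consider a Bayesian network as described in the context, with source node $X$. Let $W$ be a node and $V$ a set of nodes such that $W\notin V$, $W\neq X$, and $W>v$ for every $v\in V$. Then $$\eta_{\mathrm{KL}}(P_{V\cup\{W\}|X})\le \eta_W\,\eta_{\mathrm{KL}}(P_{V\cup \mathrm{pa}(W)|X})+(1-\eta_W)\,\eta_{\mathrm{KL}}(P_{V|X}).$$ Moreover, for every set of nodes $V$, $$\eta_{\mathrm{KL}}(P_{V|X})\le \mathrm{perc}(V).$$ In particular, if $\eta_v<1$ for all nodes $v\ne X$, then $\eta_{\mathrm{KL}}(P_{V|X})<1$ for every $V$ not containing $X$.
   Context: Bayesian network: a finite directed acyclic graph whose vertices are random variables $Y_v$ taking values in finite alphabets; each vertex $v$ with parents $\mathrm{pa}(v)$ is equipped with a conditional distribution $P_{Y_v|Y_{\mathrm{pa}(v)}}$, except a distinguished source node $X$ with no inbound edges (other parentless nodes have specified marginals and are independent of everything else given nothing). Vertices are topologically sorted: $v_1>v_2$ implies there is no directed path from $v_1$ to $v_2$. For a set of nodes $V$, $P_{V|X}$ denotes the induced kernel from $X$ to $Y_V=(Y_v)_{v\in V}$. For a kernel $K$, $\eta_{\mathrm{KL}}(K)=\sup_Q\sup_P D(K\circ P\|K\circ Q)/D(P\|Q)$, the supremum over input distributions $Q$ not a point mass and $P$ with $0<D(P\|Q)<\infty$, where $D$ is KL divergence and $K\circ P$ the output distribution. Set $\eta_v=\eta_{\mathrm{KL}}(P_{Y_v|Y_{\mathrm{pa}(v)}})$ (with $\eta_v=0$ for parentless nodes other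 than $X$). Site percolation: each node $v\ne X$ is independently removed with probability $1-\eta_v$ ($X$ is never removed); $\mathrm{perc}(V)$ is the probability that there exists a sequence of nodes $v_1=X,v_2,\dots,v_n$ with $v_n\in V$, each $(v_i,v_{i+1})$ a directed edge, and no $v_i$ removed (so $\mathrm{perc}(V)=1$ if $X\in V$). *)

theory Defs
  imports "HOL-Analysis.Analysis"
begin

text \<open>A kernel from a finite input alphabet I to a finite output alphabet O is a
function K with K i o the probability of output o given input i.\<close>

definition is_dist :: "'i set \<Rightarrow> ('i \<Rightarrow> real) \<Rightarrow> bool" where
  "is_dist I P \<longleftrightarrow> (\<forall>i\<in>I. 0 \<le> P i) \<and> (\<Sum>i\<in>I. P i) = 1"

definition point_mass :: "'i set \<Rightarrow> ('i \<Rightarrow> real) \<Rightarrow> bool" where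
  "point_mass I Q \<longleftrightarrow> (\<exists>i\<in>I. \<forall>j\<in>I. Q j = (if j = i then 1 else 0))"

text \<open>Absolute continuity of P w.r.t. Q, i.e. D(P||Q) < infinity.\<close>
definition abs_cont :: "'i set \<Rightarrow> ('i \<Rightarrow> real) \<Rightarrow> ('i \<Rightarrow> real) \<Rightarrow> bool" where
  "abs_cont I P Q \<longleftrightarrow> (\<forall>i\<in>I. 0 < P i \<longrightarrow> 0 < Q i)"

text \<open>KL divergence (natural log), meaningful when abs_cont I P Q holds.\<close>
definition kl_div :: "'i set \<Rightarrow> ('i \<Rightarrow> real) \<Rightarrow> ('i \<Rightarrow> real) \<Rightarrow> real" where
  "kl_div I P Q = (\<Sum>i\<in>I. if P i = 0 then 0 else P i * ln (P i / Q i))"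

definition push :: "'i set \<Rightarrow> ('i \<Rightarrow> 'o \<Rightarrow> real) \<Rightarrow> ('i \<Rightarrow> real) \<Rightarrow> 'o \<Rightarrow> real" where
  "push I K P = (\<lambda>b. \<Sum>i\<in>I. P i * K i b)"

text \<open>eta_KL(K) = sup over Q not a point mass and P with 0 < D(P||Q) < infinity of
D(K o P || K o Q) / D(P || Q).  (If no admissible pair exists, i.e. the input alphabet
is a singleton, the value is 0; otherwise inserting 0 does not change the supremum
since all ratios are nonnegative.)\<close>
definition eta_KL :: "'i set \<Rightarrow> 'o set \<Rightarrow> ('i \<Rightarrow> 'o \<Rightarrow> real) \<Rightarrow> real" where
  "eta_KL I Y K = Sup (insert 0
     {kl_div Y (push I K P) (push I K Q) / kl_div I P Q | P Q.
        is_dist I P \<and> is_dist I Q \<and> \<not> point_mass I Q \<and> abs_cont I P Q \<and> 0 < kl_div I P Q})"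

text \<open>Nodes N (finite) of type 'n, directed edges E, source node x0, finite nonempty
alphabets A v (values of type 'a), conditional distributions K v pa b = P(Y_v = b | Y_pa(v) = pa)
where pa ranges over assignments in PiE (parents v) A.  A topological sort is given by an
injective numbering ord on N with edges going from smaller to larger numbers (so
ord v1 > ord v2 implies there is no directed path from v1 to v2).\<close>

definition parents :: "('n \<times> 'n) set \<Rightarrow> 'n \<Rightarrow> 'n set" where
  "parents E v = {u. (u, v) \<in> E}"

definition bayes_net ::
  "'n set \<Rightarrow> ('n \<times> 'n) set \<Rightarrow> 'n \<Rightarrow> ('n \<Rightarrow> 'a set) \<Rightarrow> ('n \<Rightarrow> ('n \<Rightarrow> 'a) \<Rightarrow> 'a \<Rightarrow> real)
    \<Rightarrow> ('n \<Rightarrow> nat) \<Rightarrow> bool" where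
  "bayes_net N E x0 A K ord \<longleftrightarrow>
     finite N \<and> x0 \<in> N \<and> E \<subseteq> N \<times> N \<and> acyclic E \<and>
     (\<forall>u. (u, x0) \<notin> E) \<and>
     (\<forall>v\<in>N. finite (A v) \<and> A v \<noteq> {}) \<and>
     (\<forall>v\<in>N - {x0}. \<forall>p\<in>PiE (parents E v) A.
          (\<forall>b\<in>A v. 0 \<le> K v p b) \<and> (\<Sum>b\<in>A v. K v p b) = 1) \<and>
     inj_on ord N \<and> (\<forall>(u, v)\<in>E. ord u < ord v)"

definition joint ::
  "'n set \<Rightarrow> ('n \<times> 'n) set \<Rightarrow> 'n \<Rightarrow> ('n \<Rightarrow> ('n \<Rightarrow> 'a) \<Rightarrow> 'a \<Rightarrow> real) \<Rightarrow> 'a \<Rightarrow> ('n \<Rightarrow> 'a) \<Rightarrow> real" where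
  "joint N E x0 K x y =
     (if y x0 = x then 1 else 0) * (\<Prod>v\<in>N - {x0}. K v (restrict y (parents E v)) (y v))"

definition induced_kernel ::
  "'n set \<Rightarrow> ('n \<times> 'n) set \<Rightarrow> 'n \<Rightarrow> ('n \<Rightarrow> 'a set) \<Rightarrow> ('n \<Rightarrow> ('n \<Rightarrow> 'a) \<Rightarrow> 'a \<Rightarrow> real)
     \<Rightarrow> 'n set \<Rightarrow> 'a \<Rightarrow> ('n \<Rightarrow> 'a) \<Rightarrow> real" where
  "induced_kernel N E x0 A K V x z =
     (\<Sum>y\<in>{y \<in> PiE N A. restrict y V = z}. joint N E x0 K x y)"

definition eta_set ::
  "'n set \<Rightarrow> ('n \<times> 'n) set \<Rightarrow> 'n \<Rightarrow> ('n \<Rightarrow> 'a set) \<Rightarrow> ('n \<Rightarrow> ('n \<Rightarrow> 'a) \<Rightarrow> 'a \<Rightarrow> real)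
     \<Rightarrow> 'n set \<Rightarrow> real" where
  "eta_set N E x0 A K V = eta_KL (A x0) (PiE V A) (induced_kernel N E x0 A K V)"

definition eta_node ::
  "('n \<times> 'n) set \<Rightarrow> ('n \<Rightarrow> 'a set) \<Rightarrow> ('n \<Rightarrow> ('n \<Rightarrow> 'a) \<Rightarrow> 'a \<Rightarrow> real) \<Rightarrow> 'n \<Rightarrow> real" where
  "eta_node E A K v =
     (if parents E v = {} then 0 else eta_KL (PiE (parents E v) A) (A v) (K v))"

text \<open>Site percolation: each node v \<noteq> x0 is kept independently with probability p v.
S is the set of kept nodes other than x0; perc(V) is the probability that some node of V
is reachable from x0 by a directed path through kept nodes.\<close>
definition perc :: "'n set \<Rightarrow> ('n \<times> 'n) set \<Rightarrow> 'n \<Rightarrow> ('n \<Rightarrow> real) \<Rightarrow> 'n set \<Rightarrow> real" where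
  "perc N E x0 p V =
     (\<Sum>S\<in>Pow (N - {x0}).
        (\<Prod>v\<in>S. p v) * (\<Prod>v\<in>(N - {x0}) - S. 1 - p v) *
        (if \<exists>w\<in>V. (x0, w) \<in> (E \<inter> (insert x0 S \<times> insert x0 S))\<^sup>* then 1 else 0))"

end

theory Submission
  imports Defs
begin

definition fkl :: "real \<Rightarrow> real \<Rightarrow> real" where
  "fkl a b = (if a = 0 then 0 else a * ln (a / b))"

lemma kl_div_fkl: "kl_div I P Q = (\<Sum>i\<in>I. fkl (P i) (Q i))"
  unfolding kl_div_def fkl_def by simp

lemma fkl_zero[simp]: "fkl 0 b = 0" by (simp add: fkl_def)

lemma fkl_self[simp]: "fkl a a = 0" by (simp add: fkl_def)

lemma logsum2:
  fixes a1 a2 b1 b2 :: real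
  assumes "a1 \<ge> 0" "a2 \<ge> 0" "b1 \<ge> 0" "b2 \<ge> 0" "a1 > 0 \<Longrightarrow> b1 > 0" "a2 > 0 \<Longrightarrow> b2 > 0"
  shows "fkl (a1 + a2) (b1 + b2) \<le> fkl a1 b1 + fkl a2 b2"
proof (cases "a1 = 0")
  case True
  show ?thesis
  proof (cases "a2 = 0")
    case True with \<open>a1 = 0\<close> show ?thesis by simp
  next
    case False
    then have "a2 > 0" "b2 > 0" using assms by auto
    have "ln (a2 / (b1 + b2)) \<le> ln (a2 / b2)"
      using \<open>a2 > 0\<close> \<open>b2 > 0\<close> assms(3)
      by (subst ln_le_cancel_iff) (auto intro!: divide_left_mono mult_pos_pos)
    then have "a2 * ln (a2 / (b1 + b2)) \<le> a2 * ln (a2 / b2)"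
      using \<open>a2 > 0\<close> by (simp add: mult_left_mono)
    then show ?thesis using True False by (simp add: fkl_def)
  qed
next
  case False
  then have p1: "a1 > 0" "b1 > 0" using assms by auto
  show ?thesis
  proof (cases "a2 = 0")
    case True
    have "ln (a1 / (b1 + b2)) \<le> ln (a1 / b1)"
      using p1 assms(4)
      by (subst ln_le_cancel_iff) (auto intro!: divide_left_mono mult_pos_pos)
    then have "a1 * ln (a1 / (b1 + b2)) \<le> a1 * ln (a1 / b1)"
      using p1 by (simp add: mult_left_mono)
    then show ?thesis using True False by (simp add: fkl_def)
  next
    case False
    then have p2: "a2 > 0" "b2 > 0" using assms by auto
    define A where "A = a1 + a2"
    define B where "B = b1 + b2"
    have AB: "A > 0" "B > 0" using p1 p2 by (auto simp: A_def B_def)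
    have key: "a1 * ln (a1 / b1) - a1 * ln (A / B) \<ge> a1 - b1 * A / B"
      if "a1 > 0" "b1 > 0" for a1 b1
    proof -
      define t where "t = (b1 * A) / (a1 * B)"
      have t: "t > 0" using that AB by (simp add: t_def)
      have "ln t \<le> t - 1" using t by (rule ln_le_minus_one)
      moreover have "ln t = ln (A / B) - ln (a1 / b1)"
        using that AB by (simp add: t_def ln_div ln_mult)
      ultimately have "a1 * (ln (a1 / b1) - ln (A / B)) \<ge> a1 * (1 - t)"
        using that by (intro mult_left_mono) auto
      moreover have "a1 * (1 - t) = a1 - b1 * A / B"
        using that AB by (simp add: t_def field_simps)
      ultimately show ?thesis by (simp add: algebra_simps)
    qed
    have "a1 * ln (a1 / b1) + a2 * ln (a2 / b2) - A * ln (A / B) \<ge> (a1 - b1 * A / B) + (a2 - b2 * A / B)"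
      using key[OF p1] key[OF p2] by (simp add: A_def algebra_simps)
    moreover have "(a1 - b1 * A / B) + (a2 - b2 * A / B) = 0"
      using AB by (simp add: A_def B_def field_simps)
    ultimately show ?thesis using p1 p2 AB by (simp add: fkl_def A_def B_def)
  qed
qed

lemma logsum:
  assumes "finite I" "\<And>i. i \<in> I \<Longrightarrow> a i \<ge> 0" "\<And>i. i \<in> I \<Longrightarrow> b i \<ge> 0"
    "\<And>i. i \<in> I \<Longrightarrow> a i > 0 \<Longrightarrow> b i > 0"
  shows "fkl (\<Sum>i\<in>I. a i) (\<Sum>i\<in>I. b i) \<le> (\<Sum>i\<in>I. fkl (a i) (b i))"
  using assms
proof (induction I rule: finite_induct)
  case empty
  then show ?case by simp
next
  case (insert x F)
  have sa: "(\<Sum>i\<in>F. a i) \<ge> 0" "(\<Sum>i\<in>F. b i) \<ge> 0"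
    using insert by (auto intro: sum_nonneg)
  have sp: "(\<Sum>i\<in>F. b i) > 0" if "(\<Sum>i\<in>F. a i) > 0"
  proof -
    have "\<exists>i\<in>F. a i > 0"
    proof (rule ccontr)
      assume "\<not> ?thesis"
      then have "(\<Sum>i\<in>F. a i) \<le> 0" by (intro sum_nonpos) (auto simp: not_less)
      then show False using that by simp
    qed
    then obtain i where "i \<in> F" "a i > 0" by blast
    then have "b i > 0" using insert by auto
    then show ?thesis using \<open>i \<in> F\<close> insert by (intro sum_pos2) auto
  qed
  have "fkl (\<Sum>i\<in>insert x F. a i) (\<Sum>i\<in>insert x F. b i)
        = fkl (a x + (\<Sum>i\<in>F. a i)) (b x + (\<Sum>i\<in>F. b i))"
    using insert by simp
  also have "\<dots> \<le> fkl (a x) (b x) + fkl (\<Sum>i\<in>F. a i) (\<Sum>i\<in>F. b i)"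
    using insert sa sp by (intro logsum2) auto
  also have "\<dots> \<le> fkl (a x) (b x) + (\<Sum>i\<in>F. fkl (a i) (b i))"
    using insert by auto
  also have "\<dots> = (\<Sum>i\<in>insert x F. fkl (a i) (b i))"
    using insert by simp
  finally show ?case .
qed

lemma is_dist_finite: "is_dist I P \<Longrightarrow> finite I"
  unfolding is_dist_def by (metis sum.infinite zero_neq_one)

lemma gibbs:
  assumes "is_dist I P" "is_dist I Q" "abs_cont I P Q"
  shows "0 \<le> kl_div I P Q"
proof -
  have "fkl (\<Sum>i\<in>I. P i) (\<Sum>i\<in>I. Q i) \<le> (\<Sum>i\<in>I. fkl (P i) (Q i))"
    using assms is_dist_finite[OF assms(1)]
    by (intro logsum) (auto simp: is_dist_def abs_cont_def)
  then show ?thesis using assms by (simp add: kl_div_fkl is_dist_def)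
qed

lemma kl_self: "kl_div I P P = 0" by (simp add: kl_div_fkl)

definition stoch :: "'i set \<Rightarrow> 'o set \<Rightarrow> ('i \<Rightarrow> 'o \<Rightarrow> real) \<Rightarrow> bool" where
  "stoch I Y K \<longleftrightarrow> (\<forall>i\<in>I. is_dist Y (K i))"

lemma push_dist:
  assumes "is_dist I P" "stoch I Y K" "finite Y"
  shows "is_dist Y (push I K P)"
proof -
  have "(\<Sum>b\<in>Y. push I K P b) = (\<Sum>i\<in>I. P i * (\<Sum>b\<in>Y. K i b))"
    unfolding push_def by (subst sum.swap) (simp add: sum_distrib_left)
  also have "\<dots> = (\<Sum>i\<in>I. P i)"
    using assms by (intro sum.cong) (auto simp: stoch_def is_dist_def)
  finally show ?thesis using assms
    by (auto simp: is_dist_def push_def stoch_def intro!: sum_nonneg)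
qed

lemma push_abs:
  assumes "is_dist I P" "is_dist I Q" "abs_cont I P Q" "stoch I Y K"
  shows "abs_cont Y (push I K P) (push I K Q)"
  unfolding abs_cont_def
proof (intro ballI impI)
  fix b assume "b \<in> Y" "0 < push I K P b"
  have fin: "finite I" using is_dist_finite assms by blast
  have "\<exists>i\<in>I. P i * K i b > 0"
  proof (rule ccontr)
    assume "\<not> ?thesis"
    then have "push I K P b \<le> 0" unfolding push_def by (intro sum_nonpos) (auto simp: not_less)
    then show False using \<open>0 < push I K P b\<close> by simp
  qed
  then obtain i where i: "i \<in> I" "P i * K i b > 0" by blast
  have "P i \<ge> 0" "K i b \<ge> 0" using assms i \<open>b \<in> Y\<close> by (auto simp: is_dist_def stoch_def)
  then have "P i > 0" "K i b > 0" using i(2) by (auto simp: zero_less_mult_iff)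
  then have "Q i > 0" using assms i by (auto simp: abs_cont_def)
  then have "Q i * K i b > 0" using \<open>K i b > 0\<close> by simp
  then show "0 < push I K Q b" unfolding push_def
    using fin i assms \<open>b \<in> Y\<close>
    by (intro sum_pos2[of _ i]) (auto simp: is_dist_def stoch_def)
qed

lemma fkl_scale:
  assumes "k \<ge> 0" "p \<ge> 0" "p > 0 \<Longrightarrow> q > 0"
  shows "fkl (p * k) (q * k) = k * fkl p q"
proof (cases "k = 0 \<or> p = 0")
  case True then show ?thesis by auto
next
  case False
  then have "p * k / (q * k) = p / q" by simp
  then show ?thesis using False by (simp add: fkl_def)
qed

lemma dpi:
  assumes "is_dist I P" "is_dist I Q" "abs_cont I P Q" "stoch I Y K" "finite Y"
  shows "kl_div Y (push I K P) (push I K Q) \<le> kl_div I P Q"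
proof -
  have fin: "finite I" using is_dist_finite assms by blast
  have "kl_div Y (push I K P) (push I K Q) = (\<Sum>b\<in>Y. fkl (\<Sum>i\<in>I. P i * K i b) (\<Sum>i\<in>I. Q i * K i b))"
    by (simp add: kl_div_fkl push_def)
  also have "\<dots> \<le> (\<Sum>b\<in>Y. \<Sum>i\<in>I. fkl (P i * K i b) (Q i * K i b))"
    using assms fin
    by (intro sum_mono logsum)
       (auto simp: is_dist_def stoch_def abs_cont_def zero_less_mult_iff)
  also have "\<dots> = (\<Sum>i\<in>I. \<Sum>b\<in>Y. K i b * fkl (P i) (Q i))"
    apply (subst sum.swap)
    apply (rule sum.cong[OF refl])
    apply (rule sum.cong[OF refl])
    apply (rule fkl_scale)
    using assms by (auto simp: is_dist_def stoch_def abs_cont_def)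
  also have "\<dots> = (\<Sum>i\<in>I. (\<Sum>b\<in>Y. K i b) * fkl (P i) (Q i))"
    by (simp only: sum_distrib_right)
  also have "\<dots> = (\<Sum>i\<in>I. fkl (P i) (Q i))"
    using assms by (intro sum.cong refl) (simp add: is_dist_def stoch_def)
  finally show ?thesis by (simp add: kl_div_fkl)
qed


definition ratios :: "'i set \<Rightarrow> 'o set \<Rightarrow> ('i \<Rightarrow> 'o \<Rightarrow> real) \<Rightarrow> real set" where
  "ratios I Y K = {kl_div Y (push I K P) (push I K Q) / kl_div I P Q | P Q.
        is_dist I P \<and> is_dist I Q \<and> \<not> point_mass I Q \<and> abs_cont I P Q \<and> 0 < kl_div I P Q}"

lemma eta_KL_ratios: "eta_KL I Y K = Sup (insert 0 (ratios I Y K))"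
  unfolding eta_KL_def ratios_def by simp

lemma ratios_bounds:
  assumes "stoch I Y K" "finite Y"
  shows "ratios I Y K \<subseteq> {0..1}"
proof
  fix r assume "r \<in> ratios I Y K"
  then obtain P Q where PQ: "is_dist I P" "is_dist I Q" "abs_cont I P Q" "0 < kl_div I P Q"
    and r: "r = kl_div Y (push I K P) (push I K Q) / kl_div I P Q"
    unfolding ratios_def by blast
  have "kl_div Y (push I K P) (push I K Q) \<le> kl_div I P Q" using dpi PQ assms by blast
  moreover have "0 \<le> kl_div Y (push I K P) (push I K Q)"
    using gibbs push_dist push_abs PQ assms by blast
  ultimately show "r \<in> {0..1}" using PQ(4) r by auto
qed

lemma eta_bounds:
  assumes "stoch I Y K" "finite Y"
  shows "0 \<le> eta_KL I Y K" "eta_KL I Y K \<le> 1"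
proof -
  have bdd: "bdd_above (insert 0 (ratios I Y K))"
    using ratios_bounds[OF assms] by (auto intro!: bdd_aboveI[of _ 1])
  show "0 \<le> eta_KL I Y K" unfolding eta_KL_ratios
    using bdd by (intro cSup_upper) auto
  show "eta_KL I Y K \<le> 1" unfolding eta_KL_ratios
    using ratios_bounds[OF assms] by (intro cSup_least) auto
qed

lemma eta_le:
  assumes "stoch I Y K" "finite Y" "is_dist I P" "is_dist I Q" "abs_cont I P Q"
  shows "kl_div Y (push I K P) (push I K Q) \<le> eta_KL I Y K * kl_div I P Q"
proof -
  have g0: "0 \<le> kl_div I P Q" using gibbs assms by blast
  have e0: "0 \<le> eta_KL I Y K" using eta_bounds assms by blast
  have dp: "kl_div Y (push I K P) (push I K Q) \<le> kl_div I P Q" using dpi assms by blast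
  show ?thesis
  proof (cases "point_mass I Q")
    case True
    then obtain i where i: "i \<in> I" "\<And>j. j \<in> I \<Longrightarrow> Q j = (if j = i then 1 else 0)"
      unfolding point_mass_def by blast
    have Pz: "P j = 0" if "j \<in> I" "j \<noteq> i" for j
    proof -
      have "Q j = 0" using i that by simp
      moreover have "P j \<ge> 0" using assms(3) that by (simp add: is_dist_def)
      ultimately show ?thesis using assms(5) that unfolding abs_cont_def by force
    qed
    have fin: "finite I" using is_dist_finite assms by blast
    have "(\<Sum>j\<in>I. P j) = P i + (\<Sum>j\<in>I-{i}. P j)"
      using fin i by (simp add: sum.remove)
    also have "(\<Sum>j\<in>I-{i}. P j) = 0"
      using Pz by (intro sum.neutral) auto
    finally have "(\<Sum>j\<in>I. P j) = P i" by simp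
    then have "P i = 1" using assms(3) by (simp add: is_dist_def)
    then have PQ: "\<And>j. j \<in> I \<Longrightarrow> P j = Q j" using Pz i by auto
    have "push I K P = push I K Q" unfolding push_def
      using PQ by (intro ext sum.cong) auto
    then have "kl_div Y (push I K P) (push I K Q) = 0" by (simp add: kl_self)
    then show ?thesis using g0 e0 by simp
  next
    case nonpm: False
    show ?thesis
    proof (cases "kl_div I P Q > 0")
      case True
      have r: "kl_div Y (push I K P) (push I K Q) / kl_div I P Q \<in> ratios I Y K"
        unfolding ratios_def using assms nonpm True by blast
      have bdd: "bdd_above (insert 0 (ratios I Y K))"
        using ratios_bounds[OF assms(1,2)] by (auto intro!: bdd_aboveI[of _ 1])
      have "kl_div Y (push I K P) (push I K Q) / kl_div I P Q \<le> eta_KL I Y K"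
        unfolding eta_KL_ratios using r bdd by (intro cSup_upper) auto
      then show ?thesis using True by (simp add: pos_divide_le_eq)
    next
      case False
      then show ?thesis using g0 dp by simp
    qed
  qed
qed

lemma eta_least:
  assumes "0 \<le> c"
    and "\<And>P Q. is_dist I P \<Longrightarrow> is_dist I Q \<Longrightarrow> abs_cont I P Q \<Longrightarrow>
           kl_div Y (push I K P) (push I K Q) \<le> c * kl_div I P Q"
  shows "eta_KL I Y K \<le> c"
  unfolding eta_KL_ratios
proof (intro cSup_least)
  fix r assume "r \<in> insert 0 (ratios I Y K)"
  then show "r \<le> c"
  proof
    assume "r = 0" then show ?thesis using assms by simp
  next
    assume "r \<in> ratios I Y K"
    then obtain P Q where PQ: "is_dist I P" "is_dist I Q" "abs_cont I P Q" "0 < kl_div I P Q"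
      and r: "r = kl_div Y (push I K P) (push I K Q) / kl_div I P Q"
      unfolding ratios_def by blast
    show ?thesis using assms(2)[OF PQ(1-3)] PQ(4) r by (simp add: pos_divide_le_eq)
  qed
qed auto


definition mrg :: "'n set \<Rightarrow> ('n \<Rightarrow> 'a) \<Rightarrow> ('n \<Rightarrow> 'a) \<Rightarrow> 'n \<Rightarrow> 'a" where
  "mrg S h g = (\<lambda>v. if v \<in> S then h v else g v)"

lemma sum_PiE_insert:
  assumes "x \<notin> S"
  shows "(\<Sum>f\<in>PiE (insert x S) T. h f) = (\<Sum>b\<in>T x. \<Sum>g\<in>PiE S T. h (g(x:=b)))"
proof -
  have "(\<Sum>f\<in>PiE (insert x S) T. h f) = (\<Sum>p\<in>T x \<times> PiE S T. h ((\<lambda>(y, g). g(x := y)) p))"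
    unfolding PiE_insert_eq by (rule sum.reindex[OF inj_combinator[OF assms], unfolded comp_def])
  also have "\<dots> = (\<Sum>b\<in>T x. \<Sum>g\<in>PiE S T. h (g(x:=b)))"
    by (simp add: sum.cartesian_product split_def)
  finally show ?thesis .
qed

lemma sum_PiE_split:
  assumes "S \<subseteq> N"
  shows "(\<Sum>y\<in>PiE N A. f y) = (\<Sum>g\<in>PiE (N-S) A. \<Sum>h\<in>PiE S A. f (mrg S h g))"
proof -
  have bij: "bij_betw (\<lambda>(g,h). mrg S h g) (PiE (N-S) A \<times> PiE S A) (PiE N A)"
  proof (rule bij_betwI[where g = "\<lambda>y. (restrict y (N-S), restrict y S)"])
    show "(\<lambda>(g,h). mrg S h g) \<in> PiE (N-S) A \<times> PiE S A \<rightarrow> PiE N A"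
      using assms by (auto simp: mrg_def PiE_def extensional_def Pi_def)
    show "(\<lambda>y. (restrict y (N-S), restrict y S)) \<in> PiE N A \<rightarrow> PiE (N-S) A \<times> PiE S A"
      using assms by auto
    show "(\<lambda>y. (restrict y (N-S), restrict y S)) ((\<lambda>(g,h). mrg S h g) p) = p"
      if "p \<in> PiE (N-S) A \<times> PiE S A" for p
      using that assms by (cases p) (auto simp: mrg_def restrict_def fun_eq_iff PiE_def extensional_def)
    show "(\<lambda>(g,h). mrg S h g) ((\<lambda>y. (restrict y (N-S), restrict y S)) y) = y"
      if "y \<in> PiE N A" for y
      using that assms by (auto simp: mrg_def restrict_def fun_eq_iff PiE_def extensional_def)
  qed
  have "(\<Sum>g\<in>PiE (N-S) A. \<Sum>h\<in>PiE S A. f (mrg S h g))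
        = (\<Sum>p\<in>PiE (N-S) A \<times> PiE S A. f ((\<lambda>(g,h). mrg S h g) p))"
    by (simp add: sum.cartesian_product split_def)
  also have "\<dots> = (\<Sum>y\<in>PiE N A. f y)"
    by (rule sum.reindex_bij_betw[OF bij])
  finally show ?thesis by simp
qed

locale BN =
  fixes N :: "'n set" and E :: "('n \<times> 'n) set" and x0 :: 'n
    and A :: "'n \<Rightarrow> 'a set" and K :: "'n \<Rightarrow> ('n \<Rightarrow> 'a) \<Rightarrow> 'a \<Rightarrow> real"
    and ord :: "'n \<Rightarrow> nat"
  assumes bn: "bayes_net N E x0 A K ord"
begin

lemma finN: "finite N" and x0N: "x0 \<in> N" and EN: "E \<subseteq> N \<times> N"
  and noin: "\<And>u. (u, x0) \<notin> E"
  and finA: "\<And>v. v \<in> N \<Longrightarrow> finite (A v)" and neA: "\<And>v. v \<in> N \<Longrightarrow> A v \<noteq> {}"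
  and Kst: "\<And>v p. v \<in> N - {x0} \<Longrightarrow> p \<in> PiE (parents E v) A \<Longrightarrow> is_dist (A v) (K v p)"
  and injo: "inj_on ord N" and ordE: "\<And>u v. (u, v) \<in> E \<Longrightarrow> ord u < ord v"
  using bn unfolding bayes_net_def is_dist_def by auto

lemma par_sub: "parents E v \<subseteq> N"
  using EN by (auto simp: parents_def)

lemma par_ord: "u \<in> parents E v \<Longrightarrow> ord u < ord v"
  using ordE by (auto simp: parents_def)

lemma par_x0: "parents E x0 = {}"
  using noin by (auto simp: parents_def)

lemma fin_par: "finite (parents E v)"
  using par_sub finN finite_subset by blast

lemma finPiE: "V \<subseteq> N \<Longrightarrow> finite (PiE V A)"
  using finN finA by (intro finite_PiE) (auto intro: finite_subset)

lemma Kstoch: "v \<in> N - {x0} \<Longrightarrow> stoch (PiE (parents E v) A) (A v) (K v)"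
  using Kst by (auto simp: stoch_def)

lemma restr_in: "(\<And>u. u \<in> parents E v \<Longrightarrow> y u \<in> A u) \<Longrightarrow> restrict y (parents E v) \<in> PiE (parents E v) A"
  by auto

lemma Knn: "v \<in> N - {x0} \<Longrightarrow> (\<And>u. u \<in> parents E v \<Longrightarrow> y u \<in> A u) \<Longrightarrow> b \<in> A v \<Longrightarrow>
   0 \<le> K v (restrict y (parents E v)) b"
  using Kst[OF _ restr_in] by (auto simp: is_dist_def)

definition Fp :: "'n set \<Rightarrow> ('n \<Rightarrow> 'a) \<Rightarrow> real" where
  "Fp S y = (\<Prod>v\<in>S. K v (restrict y (parents E v)) (y v))"

lemma Fp_cong:
  assumes "\<And>v u. v \<in> S \<Longrightarrow> u \<in> parents E v \<Longrightarrow> u \<notin> S \<Longrightarrow> g1 u = g2 u"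
  shows "Fp S (mrg S h g1) = Fp S (mrg S h g2)"
  unfolding Fp_def
proof (rule prod.cong[OF refl])
  fix v assume "v \<in> S"
  have "restrict (mrg S h g1) (parents E v) = restrict (mrg S h g2) (parents E v)"
    using assms \<open>v \<in> S\<close> by (auto simp: mrg_def restrict_def fun_eq_iff)
  then show "K v (restrict (mrg S h g1) (parents E v)) (mrg S h g1 v) =
             K v (restrict (mrg S h g2) (parents E v)) (mrg S h g2 v)"
    using \<open>v \<in> S\<close> by (simp add: mrg_def)
qed

lemma sumout:
  assumes "finite S" "S \<subseteq> N - {x0}" "\<And>v. v \<in> N - S \<Longrightarrow> g v \<in> A v"
  shows "(\<Sum>h\<in>PiE S A. Fp S (mrg S h g)) = 1"
  using assms
proof (induction S arbitrary: g rule: finite_remove_induct)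
  case empty
  then show ?case by (simp add: Fp_def)
next
  case (remove S)
  have fo: "finite (ord ` S)" "ord ` S \<noteq> {}" using remove.hyps(1,2) by auto
  obtain m where m1: "m \<in> S" "ord m = Max (ord ` S)"
    using Max_in[OF fo] by auto
  have m: "m \<in> S" "\<And>v. v \<in> S \<Longrightarrow> ord v \<le> ord m"
    using m1 Max_ge[OF fo(1)] by auto
  define S' where "S' = S - {m}"
  have SS: "S = insert m S'" "m \<notin> S'" using m by (auto simp: S'_def)
  have mN: "m \<in> N - {x0}" using m remove.prems by auto
  have mpar: "m \<notin> parents E v" if "v \<in> S" for v
    using par_ord m that by fastforce
  have Anm: "A m \<noteq> {}" using neA mN by auto
  then obtain c where c: "c \<in> A m" by blast
  have IH: "(\<Sum>h\<in>PiE S' A. Fp S' (mrg S' h (g(m:=c)))) = 1"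
    unfolding S'_def
    using remove.prems c by (intro remove.IH[OF m(1)]) auto
  have IH': "(\<Sum>h\<in>PiE S' A. Fp S' (mrg S' h g)) = 1"
  proof -
    have "Fp S' (mrg S' h (g(m:=c))) = Fp S' (mrg S' h g)" for h
      using mpar SS by (intro Fp_cong) auto
    then show ?thesis using IH by simp
  qed
  have "(\<Sum>h\<in>PiE S A. Fp S (mrg S h g))
        = (\<Sum>b\<in>A m. \<Sum>h\<in>PiE S' A. Fp S (mrg S (h(m:=b)) g))"
    unfolding SS(1) by (rule sum_PiE_insert[OF SS(2)])
  also have "\<dots> = (\<Sum>b\<in>A m. \<Sum>h\<in>PiE S' A.
       K m (restrict (mrg S' h g) (parents E m)) b * Fp S' (mrg S' h g))"
  proof (intro sum.cong refl)
    fix b h assume "b \<in> A m" "h \<in> PiE S' A"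
    have e: "mrg S (h(m:=b)) g = mrg S' h (g(m:=b))"
      using SS by (auto simp: mrg_def fun_eq_iff)
    have r: "restrict (mrg S' h (g(m:=b))) (parents E m) = restrict (mrg S' h g) (parents E m)"
      using mpar[OF m(1)] by (auto simp: mrg_def restrict_def fun_eq_iff)
    have f: "Fp S' (mrg S' h (g(m:=b))) = Fp S' (mrg S' h g)"
      using mpar SS by (intro Fp_cong) (auto)
    show "Fp S (mrg S (h(m:=b)) g) = K m (restrict (mrg S' h g) (parents E m)) b * Fp S' (mrg S' h g)"
      unfolding e using SS r f remove.hyps(1)
      by (simp add: Fp_def mrg_def finite_subset)
  qed
  also have "\<dots> = (\<Sum>h\<in>PiE S' A. (\<Sum>b\<in>A m. K m (restrict (mrg S' h g) (parents E m)) b) * Fp S' (mrg S' h g))"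
    by (subst sum.swap) (simp add: sum_distrib_right)
  also have "\<dots> = (\<Sum>h\<in>PiE S' A. Fp S' (mrg S' h g))"
  proof (intro sum.cong refl)
    fix h assume h: "h \<in> PiE S' A"
    have "restrict (mrg S' h g) (parents E m) \<in> PiE (parents E m) A"
    proof (rule restr_in)
      fix u assume u: "u \<in> parents E m"
      have "u \<noteq> m" using par_ord[OF u] by auto
      show "mrg S' h g u \<in> A u"
      proof (cases "u \<in> S'")
        case True then show ?thesis using h by (auto simp: mrg_def)
      next
        case False
        then have "u \<notin> S" using SS \<open>u \<noteq> m\<close> by auto
        moreover have "u \<in> N" using u par_sub by auto
        ultimately show ?thesis using remove.prems False by (auto simp: mrg_def)
      qed
    qed
    then have "(\<Sum>b\<in>A m. K m (restrict (mrg S' h g) (parents E m)) b) = 1"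
      using Kst[OF mN] by (simp add: is_dist_def)
    then show "(\<Sum>b\<in>A m. K m (restrict (mrg S' h g) (parents E m)) b) * Fp S' (mrg S' h g) = Fp S' (mrg S' h g)"
      by simp
  qed
  also have "\<dots> = 1" by (rule IH')
  finally show ?case .
qed


definition jnt :: "'n set \<Rightarrow> 'a \<Rightarrow> ('n \<Rightarrow> 'a) \<Rightarrow> real" where
  "jnt M x y = (if y x0 = x then 1 else 0) * Fp (M - {x0}) y"

abbreviation IK where "IK \<equiv> induced_kernel N E x0 A K"

lemma joint_jnt: "joint N E x0 K x y = jnt N x y"
  unfolding joint_def jnt_def Fp_def by simp

lemma IK_def': "IK T x z = (\<Sum>y\<in>{y\<in>PiE N A. restrict y T = z}. jnt N x y)"
  unfolding induced_kernel_def joint_jnt ..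

lemma Fp_nonneg:
  assumes "M \<subseteq> N - {x0}" "\<And>v. v \<in> N \<Longrightarrow> y v \<in> A v"
  shows "0 \<le> Fp M y"
  unfolding Fp_def
proof (rule prod_nonneg)
  fix v assume "v \<in> M"
  then have v: "v \<in> N - {x0}" using assms by auto
  show "0 \<le> K v (restrict y (parents E v)) (y v)"
    using v assms par_sub by (intro Knn) auto
qed

lemma jnt_nonneg: "y \<in> PiE N A \<Longrightarrow> 0 \<le> jnt N x y"
  unfolding jnt_def Fp_def
  apply (intro mult_nonneg_nonneg prod_nonneg)
   apply simp
  apply (rule Knn)
  using par_sub by (auto simp: parents_def PiE_def Pi_def)

lemma marg:
  assumes S: "S \<subseteq> N - {x0}" and dc: "\<And>a b. (a, b) \<in> E \<Longrightarrow> a \<in> S \<Longrightarrow> b \<in> S"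
    and T: "T \<inter> S = {}"
  shows "IK T x z = (\<Sum>y\<in>{y\<in>PiE (N-S) A. restrict y T = z}. jnt (N-S) x y)"
proof -
  have SN: "S \<subseteq> N" using S by auto
  have finS: "finite S" using finN SN finite_subset by blast
  have fin1: "finite (PiE N A)" by (rule finPiE) simp
  have fin2: "finite (PiE (N-S) A)" by (rule finPiE) auto
  have "IK T x z = (\<Sum>y\<in>PiE N A. if restrict y T = z then jnt N x y else 0)"
    unfolding IK_def' using fin1 by (simp add: sum.inter_filter)
  also have "\<dots> = (\<Sum>g\<in>PiE (N-S) A. \<Sum>h\<in>PiE S A.
      if restrict (mrg S h g) T = z then jnt N x (mrg S h g) else 0)"
    by (rule sum_PiE_split[OF SN])
  also have "\<dots> = (\<Sum>g\<in>PiE (N-S) A. (if restrict g T = z then jnt (N-S) x g else 0))"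
  proof (intro sum.cong refl)
    fix g assume g: "g \<in> PiE (N-S) A"
    have eqs: "restrict (mrg S h g) T = restrict g T" "mrg S h g x0 = g x0" for h
      using T S by (auto simp: mrg_def restrict_def fun_eq_iff)
    have split: "Fp (N - {x0}) y = Fp ((N-S) - {x0}) y * Fp S y" for y
    proof -
      have "N - {x0} = ((N-S) - {x0}) \<union> S" using S by auto
      then have "Fp (N - {x0}) y = Fp (((N-S) - {x0}) \<union> S) y" by simp
      also have "\<dots> = Fp ((N-S) - {x0}) y * Fp S y"
        unfolding Fp_def by (rule prod.union_disjoint) (use finN finS in auto)
      finally show ?thesis .
    qed
    have outer: "Fp ((N-S) - {x0}) (mrg S h g) = Fp ((N-S) - {x0}) g" for h
      unfolding Fp_def
    proof (rule prod.cong[OF refl])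
      fix v assume v: "v \<in> N - S - {x0}"
      have "u \<notin> S" if "u \<in> parents E v" for u
        using dc[of u v] that v by (auto simp: parents_def)
      then have "restrict (mrg S h g) (parents E v) = restrict g (parents E v)"
        by (auto simp: mrg_def restrict_def fun_eq_iff)
      then show "K v (restrict (mrg S h g) (parents E v)) (mrg S h g v) =
                 K v (restrict g (parents E v)) (g v)"
        using v by (simp add: mrg_def)
    qed
    have so: "(\<Sum>h\<in>PiE S A. Fp S (mrg S h g)) = 1"
      using g by (intro sumout[OF finS S]) auto
    have "(\<Sum>h\<in>PiE S A. if restrict (mrg S h g) T = z then jnt N x (mrg S h g) else 0)
        = (\<Sum>h\<in>PiE S A. (if restrict g T = z then jnt (N-S) x g else 0) * Fp S (mrg S h g))"
      by (intro sum.cong refl) (simp add: eqs jnt_def split outer)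
    also have "\<dots> = (if restrict g T = z then jnt (N-S) x g else 0)"
      by (simp add: sum_distrib_left[symmetric] so)
    finally show "(\<Sum>h\<in>PiE S A. if restrict (mrg S h g) T = z then jnt N x (mrg S h g) else 0)
        = (if restrict g T = z then jnt (N-S) x g else 0)" .
  qed
  also have "\<dots> = (\<Sum>y\<in>{y\<in>PiE (N-S) A. restrict y T = z}. jnt (N-S) x y)"
    using fin2 by (simp add: sum.inter_filter)
  finally show ?thesis .
qed

lemma total_one:
  assumes "x \<in> A x0"
  shows "(\<Sum>y\<in>PiE N A. jnt N x y) = 1"
proof -
  have "IK {} x (\<lambda>_. undefined) = (\<Sum>y\<in>PiE N A. jnt N x y)"
    unfolding IK_def' by (simp add: restrict_def)
  also have "IK {} x (\<lambda>_. undefined) = (\<Sum>y\<in>{y\<in>PiE (N-(N-{x0})) A. restrict y {} = (\<lambda>_. undefined)}. jnt (N-(N-{x0})) x y)"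
    by (rule marg) (use EN noin in auto)
  also have "N - (N - {x0}) = {x0}" using x0N by auto
  also have "(\<Sum>y\<in>{y\<in>PiE {x0} A. restrict y {} = (\<lambda>_. undefined)}. jnt {x0} x y)
      = (\<Sum>y\<in>PiE (insert x0 {}) A. if y x0 = x then 1 else 0)"
    by (simp add: jnt_def Fp_def restrict_def)
  also have "\<dots> = (\<Sum>b\<in>A x0. if b = x then 1 else 0)"
    by (subst sum_PiE_insert) auto
  also have "\<dots> = 1" using assms finA x0N by simp
  finally show ?thesis by simp
qed

lemma IK_dist:
  assumes "x \<in> A x0" "T \<subseteq> N"
  shows "is_dist (PiE T A) (IK T x)"
  unfolding is_dist_def
proof
  show "\<forall>z\<in>PiE T A. 0 \<le> IK T x z"
    unfolding IK_def' by (auto intro!: sum_nonneg jnt_nonneg)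
  have "(\<Sum>z\<in>PiE T A. IK T x z) = (\<Sum>y\<in>PiE N A. jnt N x y)"
    unfolding IK_def'
    using finPiE[OF assms(2)] finPiE[of N] assms(2)
    by (intro sum.group) (auto simp: PiE_def Pi_def extensional_def)
  then show "(\<Sum>z\<in>PiE T A. IK T x z) = 1" using total_one assms by simp
qed

lemma IK_stoch: "T \<subseteq> N \<Longrightarrow> stoch (A x0) (PiE T A) (IK T)"
  using IK_dist by (auto simp: stoch_def)

lemma marg_cons:
  assumes "V \<subseteq> U" "U \<subseteq> N"
  shows "IK V x z = (\<Sum>u\<in>{u\<in>PiE U A. restrict u V = z}. IK U x u)"
proof -
  have "(\<Sum>u\<in>{u\<in>PiE U A. restrict u V = z}. IK U x u)
      = (\<Sum>u\<in>{u\<in>PiE U A. restrict u V = z}. \<Sum>y\<in>{y \<in> {y\<in>PiE N A. restrict y V = z}. restrict y U = u}. jnt N x y)"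
    unfolding IK_def'
  proof (rule sum.cong[OF refl])
    fix u assume "u \<in> {u\<in>PiE U A. restrict u V = z}"
    then have hu: "restrict u V = z" by simp
    have rr: "U \<inter> V = V"
      using assms(1) by auto
    have "{y\<in>PiE N A. restrict y U = u} = {y \<in> {y\<in>PiE N A. restrict y V = z}. restrict y U = u}"
      using rr hu by auto
    then show "(\<Sum>y\<in>{y\<in>PiE N A. restrict y U = u}. jnt N x y) = (\<Sum>y\<in>{y \<in> {y\<in>PiE N A. restrict y V = z}. restrict y U = u}. jnt N x y)"
      by simp
  qed
  also have "\<dots> = (\<Sum>y\<in>{y\<in>PiE N A. restrict y V = z}. jnt N x y)"
  proof (rule sum.group)
    show "finite {y\<in>PiE N A. restrict y V = z}" using finPiE[of N] by auto
    show "finite {u\<in>PiE U A. restrict u V = z}" using finPiE[OF assms(2)] by auto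
    show "(\<lambda>y. restrict y U) ` {y\<in>PiE N A. restrict y V = z} \<subseteq> {u\<in>PiE U A. restrict u V = z}"
      using assms by (auto simp: PiE_def Pi_def extensional_def Int_absorb1)
  qed
  finally show ?thesis unfolding IK_def' by simp
qed
end

lemma group_restr:
  assumes "V \<subseteq> U" "U \<subseteq> M" "finite (PiE M A)" "finite (PiE U A)"
  shows "(\<Sum>u\<in>{u\<in>PiE U A. restrict u V = w}. \<Sum>g\<in>{g\<in>PiE M A. restrict g U = u}. f g)
       = (\<Sum>g\<in>{g\<in>PiE M A. restrict g V = w}. f g)"
proof -
  have UV: "U \<inter> V = V" using assms(1) by auto
  have "(\<Sum>u\<in>{u\<in>PiE U A. restrict u V = w}. \<Sum>g\<in>{g\<in>PiE M A. restrict g U = u}. f g)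
      = (\<Sum>u\<in>{u\<in>PiE U A. restrict u V = w}. \<Sum>g\<in>{g \<in> {g\<in>PiE M A. restrict g V = w}. restrict g U = u}. f g)"
  proof (rule sum.cong[OF refl])
    fix u assume "u \<in> {u\<in>PiE U A. restrict u V = w}"
    then have hu: "restrict u V = w" by simp
    have "{g\<in>PiE M A. restrict g U = u} = {g \<in> {g\<in>PiE M A. restrict g V = w}. restrict g U = u}"
      using UV hu by auto
    then show "(\<Sum>g\<in>{g\<in>PiE M A. restrict g U = u}. f g) = (\<Sum>g\<in>{g \<in> {g\<in>PiE M A. restrict g V = w}. restrict g U = u}. f g)"
      by simp
  qed
  also have "\<dots> = (\<Sum>g\<in>{g\<in>PiE M A. restrict g V = w}. f g)"
  proof (rule sum.group)
    show "finite {g\<in>PiE M A. restrict g V = w}" using assms(3) by auto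
    show "finite {u\<in>PiE U A. restrict u V = w}" using assms(4) by auto
    show "(\<lambda>g. restrict g U) ` {g\<in>PiE M A. restrict g V = w} \<subseteq> {u\<in>PiE U A. restrict u V = w}"
      using assms by (auto simp: PiE_def Pi_def extensional_def Int_absorb1)
  qed
  finally show ?thesis .
qed

context BN
begin

lemma factor:
  assumes W: "W \<in> N - {x0}" "V \<subseteq> N" "W \<notin> V" "\<forall>v\<in>V. ord v < ord W"
    and z: "z \<in> PiE (insert W V) A"
  shows "IK (insert W V) x z =
    (\<Sum>u\<in>{u\<in>PiE (V \<union> parents E W) A. restrict u V = restrict z V}.
        IK (V \<union> parents E W) x u * K W (restrict u (parents E W)) (z W))"
proof -
  define U where "U = V \<union> parents E W"
  define D where "D = {v\<in>N-{x0}. ord W < ord v}"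
  define M' where "M' = N - insert W D"
  have ND: "N - D = insert W M'" using W by (auto simp: D_def M'_def)
  have WM: "W \<notin> M'" by (simp add: M'_def)
  have M'N: "M' \<subseteq> N" by (auto simp: M'_def)
  have finM: "finite (PiE M' A)" using finPiE[OF M'N] .
  have UN: "U \<subseteq> N" using W par_sub by (auto simp: U_def)
  have UM: "U \<subseteq> M'"
    using W par_ord par_sub by (fastforce simp: U_def M'_def D_def)
  have Wpar: "W \<notin> parents E v" if "v \<in> M'" for v
  proof
    assume "W \<in> parents E v"
    then have "(W, v) \<in> E" "ord W < ord v" using par_ord by (auto simp: parents_def)
    then have "v \<in> D" using EN noin by (auto simp: D_def)
    then show False using that by (auto simp: M'_def)
  qed
  have WpW: "W \<notin> parents E W" using par_ord by auto
  have "IK (insert W V) x z = (\<Sum>y\<in>{y\<in>PiE (N-D) A. restrict y (insert W V) = z}. jnt (N-D) x y)"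
  proof (rule marg)
    show "D \<subseteq> N - {x0}" by (auto simp: D_def)
    show "b \<in> D" if "(a, b) \<in> E" "a \<in> D" for a b
      using that EN noin ordE[OF that(1)] by (auto simp: D_def)
    show "insert W V \<inter> D = {}" using W by (auto simp: D_def)
  qed
  also have "\<dots> = (\<Sum>y\<in>PiE (insert W M') A. if restrict y (insert W V) = z then jnt (insert W M') x y else 0)"
    unfolding ND using finPiE[of "insert W M'"] M'N W by (simp add: sum.inter_filter)
  also have "\<dots> = (\<Sum>b\<in>A W. \<Sum>g\<in>PiE M' A.
      if restrict (g(W:=b)) (insert W V) = z then jnt (insert W M') x (g(W:=b)) else 0)"
    by (rule sum_PiE_insert[OF WM])
  also have "\<dots> = (\<Sum>b\<in>A W. \<Sum>g\<in>PiE M' A.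
      if b = z W then (if restrict g V = restrict z V then jnt M' x g * K W (restrict g (parents E W)) b else 0) else 0)"
  proof (intro sum.cong refl)
    fix b g assume b: "b \<in> A W" and g: "g \<in> PiE M' A"
    have c: "restrict (g(W:=b)) (insert W V) = z \<longleftrightarrow> b = z W \<and> restrict g V = restrict z V"
    proof
      assume h: "restrict (g(W:=b)) (insert W V) = z"
      have "b = z W" using fun_cong[OF h, of W] by simp
      moreover have "restrict g V = restrict z V"
      proof
        fix v show "restrict g V v = restrict z V v"
          using fun_cong[OF h, of v] W(3) by (cases "v = W") (auto simp: restrict_def)
      qed
      ultimately show "b = z W \<and> restrict g V = restrict z V" by simp
    next
      assume h: "b = z W \<and> restrict g V = restrict z V"
      show "restrict (g(W:=b)) (insert W V) = z"
      proof
        fix v show "restrict (g(W:=b)) (insert W V) v = z v"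
        proof (cases "v \<in> insert W V")
          case True
          then show ?thesis
          proof
            assume "v = W" then show ?thesis using h by simp
          next
            assume "v \<in> V"
            then show ?thesis using fun_cong[OF conjunct2[OF h], of v] W(3) by (auto simp: restrict_def)
          qed
        next
          case False
          then show ?thesis using z by (auto simp: PiE_def extensional_def)
        qed
      qed
    qed
    have fin': "finite (M' - {x0})" using M'N finN finite_subset by blast
    have j: "jnt (insert W M') x (g(W:=b)) = jnt M' x g * K W (restrict g (parents E W)) b"
    proof -
      have e1: "insert W M' - {x0} = insert W (M' - {x0})" using W by auto
      have e2: "restrict (g(W:=b)) (parents E W) = restrict g (parents E W)"
        using WpW by (auto simp: restrict_def fun_eq_iff)
      have e3: "Fp (M' - {x0}) (g(W:=b)) = Fp (M' - {x0}) g"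
        unfolding Fp_def
      proof (rule prod.cong[OF refl])
        fix v assume v: "v \<in> M' - {x0}"
        have "restrict (g(W:=b)) (parents E v) = restrict g (parents E v)"
          using Wpar v by (auto simp: restrict_def fun_eq_iff)
        moreover have "v \<noteq> W" using v WM by auto
        ultimately show "K v (restrict (g(W:=b)) (parents E v)) ((g(W:=b)) v) =
              K v (restrict g (parents E v)) (g v)" by simp
      qed
      have "x0 \<noteq> W" using W by auto
      then show ?thesis
        unfolding jnt_def e1 using fin' WM e2 e3
        by (simp add: Fp_def[of "insert W (M' - {x0})"] Fp_def[of "M' - {x0}"] prod.insert)
    qed
    show "(if restrict (g(W:=b)) (insert W V) = z then jnt (insert W M') x (g(W:=b)) else 0) =
      (if b = z W then (if restrict g V = restrict z V then jnt M' x g * K W (restrict g (parents E W)) b else 0) else 0)"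
      unfolding c j by auto
  qed
  also have "\<dots> = (\<Sum>g\<in>PiE M' A. \<Sum>b\<in>A W.
      if b = z W then (if restrict g V = restrict z V then jnt M' x g * K W (restrict g (parents E W)) b else 0) else 0)"
    by (rule sum.swap)
  also have "\<dots> = (\<Sum>g\<in>PiE M' A.
      if restrict g V = restrict z V then jnt M' x g * K W (restrict g (parents E W)) (z W) else 0)"
  proof (intro sum.cong refl)
    fix g
    have "z W \<in> A W" using z by auto
    moreover have "finite (A W)" using finA W by auto
    ultimately show "(\<Sum>b\<in>A W. if b = z W then (if restrict g V = restrict z V then jnt M' x g * K W (restrict g (parents E W)) b else 0) else 0) =
      (if restrict g V = restrict z V then jnt M' x g * K W (restrict g (parents E W)) (z W) else 0)"
      by (simp add: sum.delta')
  qed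
  also have "\<dots> = (\<Sum>g\<in>{g\<in>PiE M' A. restrict g V = restrict z V}. jnt M' x g * K W (restrict g (parents E W)) (z W))"
    using finM by (simp add: sum.inter_filter)
  finally have L: "IK (insert W V) x z = \<dots>" .
  have mU: "IK U x u = (\<Sum>g\<in>{g\<in>PiE M' A. restrict g U = u}. jnt M' x g)" for u
  proof -
    have "IK U x u = (\<Sum>g\<in>{g\<in>PiE (N - insert W D) A. restrict g U = u}. jnt (N - insert W D) x g)"
    proof (rule marg)
      show "insert W D \<subseteq> N - {x0}" using W by (auto simp: D_def)
      show "b \<in> insert W D" if "(a, b) \<in> E" "a \<in> insert W D" for a b
        using that EN noin ordE[OF that(1)] by (auto simp: D_def)
      show "U \<inter> insert W D = {}" using UM by (auto simp: M'_def)
    qed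
    then show ?thesis by (simp add: M'_def)
  qed
  have "(\<Sum>u\<in>{u\<in>PiE U A. restrict u V = restrict z V}. IK U x u * K W (restrict u (parents E W)) (z W))
     = (\<Sum>u\<in>{u\<in>PiE U A. restrict u V = restrict z V}. \<Sum>g\<in>{g\<in>PiE M' A. restrict g U = u}.
          jnt M' x g * K W (restrict g (parents E W)) (z W))"
  proof (rule sum.cong[OF refl])
    fix u assume "u \<in> {u\<in>PiE U A. restrict u V = restrict z V}"
    have pU: "U \<inter> parents E W = parents E W" by (auto simp: U_def)
    have "(\<Sum>g\<in>{g\<in>PiE M' A. restrict g U = u}. jnt M' x g * K W (restrict g (parents E W)) (z W))
        = (\<Sum>g\<in>{g\<in>PiE M' A. restrict g U = u}. jnt M' x g * K W (restrict u (parents E W)) (z W))"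
      by (rule sum.cong[OF refl]) (use pU in auto)
    then show "IK U x u * K W (restrict u (parents E W)) (z W) =
      (\<Sum>g\<in>{g\<in>PiE M' A. restrict g U = u}. jnt M' x g * K W (restrict g (parents E W)) (z W))"
      by (simp add: mU sum_distrib_right)
  qed
  also have "\<dots> = (\<Sum>g\<in>{g\<in>PiE M' A. restrict g V = restrict z V}. jnt M' x g * K W (restrict g (parents E W)) (z W))"
    by (rule group_restr) (use finM finPiE[OF UN] UM in \<open>auto simp: U_def\<close>)
  finally show ?thesis using L by (simp add: U_def)
qed

end

lemma fkl_scale2:
  assumes "\<alpha> > 0" "\<beta> > 0" "s \<ge> 0" "s > 0 \<Longrightarrow> t > 0"
  shows "fkl (\<alpha> * s) (\<beta> * t) = \<alpha> * fkl s t + \<alpha> * s * ln (\<alpha> / \<beta>)"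
proof (cases "s = 0")
  case True then show ?thesis by simp
next
  case False
  then have st: "s > 0" "t > 0" using assms by auto
  have "ln (\<alpha> * s / (\<beta> * t)) = ln (\<alpha> / \<beta>) + ln (s / t)"
    using assms st by (simp add: ln_div ln_mult)
  then show ?thesis using False assms st by (simp add: fkl_def algebra_simps)
qed

lemma fiber:
  assumes finF: "finite F" and a: "\<And>u. u \<in> F \<Longrightarrow> a u \<ge> 0" and b: "\<And>u. u \<in> F \<Longrightarrow> b u \<ge> 0"
    and ab: "\<And>u. u \<in> F \<Longrightarrow> a u > 0 \<Longrightarrow> b u > 0"
    and r: "\<And>u. u \<in> F \<Longrightarrow> r u \<in> C" and st: "stoch C Y \<kappa>" and fY: "finite Y" and fC: "finite C"
  shows "(\<Sum>y\<in>Y. fkl (\<Sum>u\<in>F. a u * \<kappa> (r u) y) (\<Sum>u\<in>F. b u * \<kappa> (r u) y))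
    \<le> eta_KL C Y \<kappa> * (\<Sum>u\<in>F. fkl (a u) (b u)) + (1 - eta_KL C Y \<kappa>) * fkl (\<Sum>u\<in>F. a u) (\<Sum>u\<in>F. b u)"
proof -
  define \<eta> where "\<eta> = eta_KL C Y \<kappa>"
  have e01: "0 \<le> \<eta>" "\<eta> \<le> 1" using eta_bounds[OF st fY] by (auto simp: \<eta>_def)
  define \<alpha> where "\<alpha> = (\<Sum>u\<in>F. a u)"
  define \<beta> where "\<beta> = (\<Sum>u\<in>F. b u)"
  have a0: "\<alpha> \<ge> 0" using a by (auto simp: \<alpha>_def intro: sum_nonneg)
  show ?thesis
  proof (cases "\<alpha> = 0")
    case True
    then have az: "a u = 0" if "u \<in> F" for u
      using sum_nonneg_eq_0_iff[OF finF] a that by (auto simp: \<alpha>_def)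
    then show ?thesis using True by (simp add: \<alpha>_def[symmetric])
  next
    case False
    then have ap: "\<alpha> > 0" using a0 by simp
    have "\<exists>u\<in>F. a u > 0"
    proof (rule ccontr)
      assume "\<not> ?thesis"
      then have "\<alpha> \<le> 0" unfolding \<alpha>_def by (intro sum_nonpos) (auto simp: not_less)
      then show False using ap by simp
    qed
    then obtain u0 where u0: "u0 \<in> F" "a u0 > 0" by blast
    have bp: "\<beta> > 0" unfolding \<beta>_def
      using finF u0 ab b by (intro sum_pos2[of _ u0]) auto
    define p where "p u = a u / \<alpha>" for u
    define q where "q u = b u / \<beta>" for u
    have pd: "is_dist F p" using a ap by (auto simp: is_dist_def p_def \<alpha>_def sum_divide_distrib[symmetric])
    have qd: "is_dist F q" using b bp by (auto simp: is_dist_def q_def \<beta>_def sum_divide_distrib[symmetric])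
    have pq: "abs_cont F p q" using ab ap bp by (auto simp: abs_cont_def p_def q_def zero_less_divide_iff)
    define \<delta> where "\<delta> u c = (if r u = c then 1 else 0 :: real)" for u c
    have \<delta>st: "stoch F C \<delta>"
      using r fC by (auto simp: stoch_def is_dist_def \<delta>_def)
    define p' where "p' = push F \<delta> p"
    define q' where "q' = push F \<delta> q"
    have p'd: "is_dist C p'" unfolding p'_def by (rule push_dist[OF pd \<delta>st fC])
    have q'd: "is_dist C q'" unfolding q'_def by (rule push_dist[OF qd \<delta>st fC])
    have p'q': "abs_cont C p' q'" unfolding p'_def q'_def by (rule push_abs[OF pd qd pq \<delta>st])
    have comp: "push C \<kappa> (push F \<delta> P) y = (\<Sum>u\<in>F. P u * \<kappa> (r u) y)" for P y
    proof -
      have "push C \<kappa> (push F \<delta> P) y = (\<Sum>c\<in>C. \<Sum>u\<in>F. P u * \<delta> u c * \<kappa> c y)"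
        by (simp add: push_def sum_distrib_right)
      also have "\<dots> = (\<Sum>u\<in>F. \<Sum>c\<in>C. P u * \<delta> u c * \<kappa> c y)" by (rule sum.swap)
      also have "\<dots> = (\<Sum>u\<in>F. P u * \<kappa> (r u) y)"
      proof (rule sum.cong[OF refl])
        fix u assume "u \<in> F"
        have "(\<Sum>c\<in>C. P u * \<delta> u c * \<kappa> c y) = (\<Sum>c\<in>C. if r u = c then P u * \<kappa> c y else 0)"
          by (intro sum.cong refl) (simp add: \<delta>_def)
        also have "\<dots> = P u * \<kappa> (r u) y" using fC r[OF \<open>u \<in> F\<close>] by (simp add: sum.delta)
        finally show "(\<Sum>c\<in>C. P u * \<delta> u c * \<kappa> c y) = P u * \<kappa> (r u) y" .
      qed
      finally show ?thesis .
    qed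
    define s where "s = push C \<kappa> p'"
    define t where "t = push C \<kappa> q'"
    have sd: "is_dist Y s" unfolding s_def by (rule push_dist[OF p'd st fY])
    have st': "abs_cont Y s t" unfolding s_def t_def by (rule push_abs[OF p'd q'd p'q' st])
    have Dk: "kl_div Y s t \<le> \<eta> * kl_div F p q"
    proof -
      have "kl_div Y s t \<le> \<eta> * kl_div C p' q'"
        unfolding s_def t_def \<eta>_def by (rule eta_le[OF st fY p'd q'd p'q'])
      also have "\<dots> \<le> \<eta> * kl_div F p q"
        using dpi[OF pd qd pq \<delta>st fC] e01 by (simp add: p'_def q'_def mult_left_mono)
      finally show ?thesis .
    qed
    have sa: "(\<Sum>u\<in>F. a u * \<kappa> (r u) y) = \<alpha> * s y" for y
      unfolding s_def p'_def comp using ap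
      by (simp add: p_def sum_distrib_left)
    have tb: "(\<Sum>u\<in>F. b u * \<kappa> (r u) y) = \<beta> * t y" for y
      unfolding t_def q'_def comp using bp
      by (simp add: q_def sum_distrib_left)
    define L where "L = ln (\<alpha> / \<beta>)"
    have lhs: "(\<Sum>y\<in>Y. fkl (\<Sum>u\<in>F. a u * \<kappa> (r u) y) (\<Sum>u\<in>F. b u * \<kappa> (r u) y))
        = \<alpha> * kl_div Y s t + \<alpha> * L"
    proof -
      have "(\<Sum>y\<in>Y. fkl (\<Sum>u\<in>F. a u * \<kappa> (r u) y) (\<Sum>u\<in>F. b u * \<kappa> (r u) y))
          = (\<Sum>y\<in>Y. \<alpha> * fkl (s y) (t y) + \<alpha> * s y * L)"
        unfolding sa tb L_def
        using sd st' ap bp by (intro sum.cong refl fkl_scale2) (auto simp: is_dist_def abs_cont_def)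
      also have "\<dots> = \<alpha> * kl_div Y s t + \<alpha> * L * (\<Sum>y\<in>Y. s y)"
        by (simp add: sum.distrib kl_div_fkl sum_distrib_left sum_distrib_right mult.commute mult.left_commute)
      finally show ?thesis using sd by (simp add: is_dist_def)
    qed
    have rhs: "(\<Sum>u\<in>F. fkl (a u) (b u)) = \<alpha> * kl_div F p q + \<alpha> * L"
    proof -
      have "(\<Sum>u\<in>F. fkl (a u) (b u)) = (\<Sum>u\<in>F. fkl (\<alpha> * p u) (\<beta> * q u))"
        using ap bp by (simp add: p_def q_def)
      also have "\<dots> = (\<Sum>u\<in>F. \<alpha> * fkl (p u) (q u) + \<alpha> * p u * L)"
        unfolding L_def
        using pd pq ap bp by (intro sum.cong refl fkl_scale2) (auto simp: is_dist_def abs_cont_def)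
      also have "\<dots> = \<alpha> * kl_div F p q + \<alpha> * L * (\<Sum>u\<in>F. p u)"
        by (simp add: sum.distrib kl_div_fkl sum_distrib_left sum_distrib_right mult.commute mult.left_commute)
      finally show ?thesis using pd by (simp add: is_dist_def)
    qed
    have fab: "fkl (\<Sum>u\<in>F. a u) (\<Sum>u\<in>F. b u) = \<alpha> * L"
      using ap by (simp add: fkl_def \<alpha>_def[symmetric] \<beta>_def[symmetric] L_def)
    have "\<alpha> * kl_div Y s t \<le> \<alpha> * (\<eta> * kl_div F p q)"
      using Dk ap by (simp add: mult_left_mono)
    then show ?thesis
      unfolding lhs rhs fab \<eta>_def[symmetric] by (simp add: algebra_simps)
  qed
qed


context BN
begin

abbreviation eS where "eS \<equiv> eta_set N E x0 A K"
abbreviation eN where "eN \<equiv> eta_node E A K"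

lemma eta_single_zero:
  assumes "stoch (PiE {} A) Y \<kappa>" "finite Y"
  shows "eta_KL (PiE {} A) Y \<kappa> = 0"
proof (rule antisym)
  show "eta_KL (PiE {} A) Y \<kappa> \<le> 0"
  proof (rule eta_least)
    fix P Q assume P: "is_dist (PiE {} A) P" and Q: "is_dist (PiE {} A) Q"
    have "P i = Q i" if "i \<in> PiE {} A" for i
      using P Q that by (simp add: is_dist_def)
    then have "push (PiE {} A) \<kappa> P = push (PiE {} A) \<kappa> Q"
      unfolding push_def by (intro ext sum.cong) auto
    then show "kl_div Y (push (PiE {} A) \<kappa> P) (push (PiE {} A) \<kappa> Q) \<le> 0 * kl_div (PiE {} A) P Q"
      by (simp add: kl_self)
  qed simp
  show "0 \<le> eta_KL (PiE {} A) Y \<kappa>" using eta_bounds[OF assms] by simp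
qed

lemma eN_eq:
  assumes v: "v \<in> N - {x0}"
  shows "eN v = eta_KL (PiE (parents E v) A) (A v) (K v)"
proof (cases "parents E v = {}")
  case True
  have st: "stoch (PiE (parents E v) A) (A v) (K v)" using Kstoch[OF v] .
  then have "stoch (PiE {} A) (A v) (K v)" unfolding True .
  then have z: "eta_KL (PiE {} A) (A v) (K v) = 0" by (rule eta_single_zero[OF _ finA]) (use v in auto)
  show ?thesis unfolding eta_node_def True using z by simp
next
  case False
  then show ?thesis unfolding eta_node_def by simp
qed

lemma eN_bounds: "v \<in> N - {x0} \<Longrightarrow> 0 \<le> eN v \<and> eN v \<le> 1"
  using eN_eq eta_bounds[OF Kstoch finA] by auto

lemma eS_bounds: "V \<subseteq> N \<Longrightarrow> 0 \<le> eS V \<and> eS V \<le> 1"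
  unfolding eta_set_def using eta_bounds[OF IK_stoch finPiE] by auto

lemma part1:
  assumes W: "W \<in> N - {x0}" "V \<subseteq> N" "W \<notin> V" "\<forall>v\<in>V. ord v < ord W"
  shows "eS (insert W V) \<le> eN W * eS (V \<union> parents E W) + (1 - eN W) * eS V"
proof -
  define U where "U = V \<union> parents E W"
  define C where "C = PiE (parents E W) A"
  define \<eta> where "\<eta> = eN W"
  have UN: "U \<subseteq> N" using W par_sub by (auto simp: U_def)
  have WN: "insert W V \<subseteq> N" using W by auto
  have VU: "V \<subseteq> U" by (auto simp: U_def)
  have e01: "0 \<le> \<eta>" "\<eta> \<le> 1" using eN_bounds[OF W(1)] by (auto simp: \<eta>_def)
  have \<eta>eq: "\<eta> = eta_KL C (A W) (K W)" using eN_eq[OF W(1)] by (simp add: \<eta>_def C_def)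
  have eU: "0 \<le> eS U" "eS U \<le> 1" using eS_bounds[OF UN] by auto
  have eV: "0 \<le> eS V" "eS V \<le> 1" using eS_bounds[OF W(2)] by auto
  have fC: "finite C" unfolding C_def by (rule finPiE[OF par_sub])
  have fAW: "finite (A W)" using finA W by auto
  have stW: "stoch C (A W) (K W)" using Kstoch W by (simp add: C_def)
  have "eS (insert W V) \<le> \<eta> * eS U + (1 - \<eta>) * eS V"
    unfolding eta_set_def[of N E x0 A K "insert W V"]
  proof (rule eta_least)
    show "0 \<le> \<eta> * eS U + (1 - \<eta>) * eS V" using e01 eU eV by simp
  next
    fix P Q assume P: "is_dist (A x0) P" and Q: "is_dist (A x0) Q" and PQ: "abs_cont (A x0) P Q"
    define RP where "RP = push (A x0) (IK U) P"
    define RQ where "RQ = push (A x0) (IK U) Q"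
    define r where "r u = restrict u (parents E W)" for u :: "'n \<Rightarrow> 'a"
    define Fv where "Fv v = {u\<in>PiE U A. restrict u V = v}" for v
    have RPd: "is_dist (PiE U A) RP" unfolding RP_def by (rule push_dist[OF P IK_stoch[OF UN] finPiE[OF UN]])
    have RQd: "is_dist (PiE U A) RQ" unfolding RQ_def by (rule push_dist[OF Q IK_stoch[OF UN] finPiE[OF UN]])
    have RPQ: "abs_cont (PiE U A) RP RQ" unfolding RP_def RQ_def by (rule push_abs[OF P Q PQ IK_stoch[OF UN]])
    have Sform: "push (A x0) (IK (insert W V)) R z = (\<Sum>u\<in>Fv (restrict z V). push (A x0) (IK U) R u * K W (r u) (z W))"
      if z: "z \<in> PiE (insert W V) A" for R z
    proof -
      have "push (A x0) (IK (insert W V)) R z = (\<Sum>x\<in>A x0. R x * (\<Sum>u\<in>Fv (restrict z V). IK U x u * K W (r u) (z W)))"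
        unfolding push_def using factor[OF W z] by (simp add: U_def Fv_def r_def)
      also have "\<dots> = (\<Sum>u\<in>Fv (restrict z V). push (A x0) (IK U) R u * K W (r u) (z W))"
        unfolding push_def by (simp add: sum_distrib_left sum_distrib_right mult.assoc sum.swap[of _ "A x0"])
      finally show ?thesis .
    qed
    have Mform: "push (A x0) (IK V) R v = (\<Sum>u\<in>Fv v. push (A x0) (IK U) R u)" for R v
      unfolding push_def Fv_def using marg_cons[OF VU UN]
      by (simp add: sum_distrib_left sum.swap[of _ "A x0"])
    have rC: "r u \<in> C" if "u \<in> Fv v" for u v
      using that by (auto simp: r_def C_def Fv_def U_def PiE_def Pi_def)
    have finFv: "finite (Fv v)" for v using finPiE[OF UN] by (simp add: Fv_def)
    have "kl_div (PiE (insert W V) A) (push (A x0) (IK (insert W V)) P) (push (A x0) (IK (insert W V)) Q)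
       = (\<Sum>b\<in>A W. \<Sum>v\<in>PiE V A. fkl (push (A x0) (IK (insert W V)) P (v(W:=b))) (push (A x0) (IK (insert W V)) Q (v(W:=b))))"
      unfolding kl_div_fkl by (rule sum_PiE_insert[OF W(3)])
    also have "\<dots> = (\<Sum>v\<in>PiE V A. \<Sum>b\<in>A W. fkl (\<Sum>u\<in>Fv v. RP u * K W (r u) b) (\<Sum>u\<in>Fv v. RQ u * K W (r u) b))"
    proof (subst sum.swap, intro sum.cong refl)
      fix v b assume v: "v \<in> PiE V A" and b: "b \<in> A W"
      have z: "v(W:=b) \<in> PiE (insert W V) A" by (rule PiE_fun_upd[OF b v])
      have rv: "restrict (v(W:=b)) V = v" using v W(3) by (auto simp: restrict_def fun_eq_iff PiE_def extensional_def)
      show "fkl (push (A x0) (IK (insert W V)) P (v(W:=b))) (push (A x0) (IK (insert W V)) Q (v(W:=b)))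
          = fkl (\<Sum>u\<in>Fv v. RP u * K W (r u) b) (\<Sum>u\<in>Fv v. RQ u * K W (r u) b)"
        using Sform[OF z, of P] Sform[OF z, of Q] rv by (simp add: RP_def RQ_def)
    qed
    also have "\<dots> \<le> (\<Sum>v\<in>PiE V A. \<eta> * (\<Sum>u\<in>Fv v. fkl (RP u) (RQ u)) + (1 - \<eta>) * fkl (\<Sum>u\<in>Fv v. RP u) (\<Sum>u\<in>Fv v. RQ u))"
    proof (rule sum_mono)
      fix v assume "v \<in> PiE V A"
      show "(\<Sum>b\<in>A W. fkl (\<Sum>u\<in>Fv v. RP u * K W (r u) b) (\<Sum>u\<in>Fv v. RQ u * K W (r u) b))
          \<le> \<eta> * (\<Sum>u\<in>Fv v. fkl (RP u) (RQ u)) + (1 - \<eta>) * fkl (\<Sum>u\<in>Fv v. RP u) (\<Sum>u\<in>Fv v. RQ u)"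
        unfolding \<eta>eq
        using RPd RQd RPQ rC
        by (intro fiber[OF finFv _ _ _ _ stW fAW fC]) (auto simp: Fv_def is_dist_def abs_cont_def)
    qed
    also have "\<dots> = \<eta> * (\<Sum>v\<in>PiE V A. \<Sum>u\<in>Fv v. fkl (RP u) (RQ u)) + (1 - \<eta>) * (\<Sum>v\<in>PiE V A. fkl (\<Sum>u\<in>Fv v. RP u) (\<Sum>u\<in>Fv v. RQ u))"
      by (simp add: sum.distrib sum_distrib_left)
    also have "(\<Sum>v\<in>PiE V A. \<Sum>u\<in>Fv v. fkl (RP u) (RQ u)) = kl_div (PiE U A) RP RQ"
      unfolding kl_div_fkl Fv_def
      using finPiE[OF UN] finPiE[OF W(2)] VU
      by (intro sum.group) (auto simp: PiE_def Pi_def extensional_def Int_absorb1)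
    also have "(\<Sum>v\<in>PiE V A. fkl (\<Sum>u\<in>Fv v. RP u) (\<Sum>u\<in>Fv v. RQ u))
        = kl_div (PiE V A) (push (A x0) (IK V) P) (push (A x0) (IK V) Q)"
      unfolding kl_div_fkl Mform RP_def RQ_def ..
    finally have main: "kl_div (PiE (insert W V) A) (push (A x0) (IK (insert W V)) P) (push (A x0) (IK (insert W V)) Q)
       \<le> \<eta> * kl_div (PiE U A) RP RQ + (1 - \<eta>) * kl_div (PiE V A) (push (A x0) (IK V) P) (push (A x0) (IK V) Q)" .
    have b1: "kl_div (PiE U A) RP RQ \<le> eS U * kl_div (A x0) P Q"
      unfolding RP_def RQ_def eta_set_def by (rule eta_le[OF IK_stoch[OF UN] finPiE[OF UN] P Q PQ])
    have b2: "kl_div (PiE V A) (push (A x0) (IK V) P) (push (A x0) (IK V) Q) \<le> eS V * kl_div (A x0) P Q"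
      unfolding eta_set_def by (rule eta_le[OF IK_stoch[OF W(2)] finPiE[OF W(2)] P Q PQ])
    have "\<eta> * kl_div (PiE U A) RP RQ + (1 - \<eta>) * kl_div (PiE V A) (push (A x0) (IK V) P) (push (A x0) (IK V) Q)
        \<le> \<eta> * (eS U * kl_div (A x0) P Q) + (1 - \<eta>) * (eS V * kl_div (A x0) P Q)"
      using b1 b2 e01 by (intro add_mono mult_left_mono) auto
    with main show "kl_div (PiE (insert W V) A) (push (A x0) (IK (insert W V)) P) (push (A x0) (IK (insert W V)) Q)
        \<le> (\<eta> * eS U + (1 - \<eta>) * eS V) * kl_div (A x0) P Q"
      by (simp add: algebra_simps)
  qed
  then show ?thesis by (simp add: \<eta>_def U_def)
qed

end


lemma sum_Pow_insert:
  assumes "finite M" "W \<notin> M"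
  shows "(\<Sum>S\<in>Pow (insert W M). f S) = (\<Sum>S\<in>Pow M. f S + f (insert W S))"
proof -
  have inj: "inj_on (insert W) (Pow M)"
    using assms(2) by (auto simp: inj_on_def)
  have "(\<Sum>S\<in>Pow (insert W M). f S) = (\<Sum>S\<in>Pow M. f S) + (\<Sum>S\<in>insert W ` Pow M. f S)"
    unfolding Pow_insert using assms by (intro sum.union_disjoint) auto
  also have "(\<Sum>S\<in>insert W ` Pow M. f S) = (\<Sum>S\<in>Pow M. f (insert W S))"
    by (rule sum.reindex[OF inj, unfolded comp_def])
  finally show ?thesis by (simp add: sum.distrib)
qed

context BN
begin

definition reach :: "'n set \<Rightarrow> 'n \<Rightarrow> bool" where
  "reach S w \<longleftrightarrow> (x0, w) \<in> (E \<inter> (insert x0 S \<times> insert x0 S))\<^sup>*"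

lemma reach_in: "reach S w \<Longrightarrow> w \<in> insert x0 S"
  unfolding reach_def by (erule rtranclE) auto

lemma reach_mono: "S \<subseteq> S' \<Longrightarrow> reach S w \<Longrightarrow> reach S' w"
  unfolding reach_def by (erule rtrancl_mono[THEN subsetD, rotated]) auto

lemma reach_ins_low:
  assumes "W \<notin> S" "W \<noteq> x0" "ord w < ord W"
  shows "reach (insert W S) w \<longleftrightarrow> reach S w"
proof
  assume "reach S w" then show "reach (insert W S) w" by (rule reach_mono[rotated]) auto
next
  assume h: "reach (insert W S) w"
  have "(x0, w) \<in> (E \<inter> (insert x0 (insert W S) \<times> insert x0 (insert W S)))\<^sup>* \<Longrightarrow> ord w < ord W \<Longrightarrow>
        (x0, w) \<in> (E \<inter> (insert x0 S \<times> insert x0 S))\<^sup>*"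
  proof (induction rule: rtrancl_induct)
    case base then show ?case by simp
  next
    case (step y z)
    have "ord y < ord z" using step(2) ordE by auto
    then have y: "ord y < ord W" using step(4) by simp
    have "y \<noteq> W" "z \<noteq> W" using y step(4) by auto
    then have "(y, z) \<in> E \<inter> (insert x0 S \<times> insert x0 S)" using step(2) by auto
    with step(3)[OF y] show ?case by (rule rtrancl_into_rtrancl)
  qed
  then show "reach S w" using h assms(3) by (simp add: reach_def)
qed

lemma reach_ins_W:
  assumes "W \<notin> S" "W \<noteq> x0"
  shows "reach (insert W S) W \<longleftrightarrow> (\<exists>u\<in>parents E W. reach S u)"
proof
  assume "reach (insert W S) W"
  then have "(x0, W) \<in> (E \<inter> (insert x0 (insert W S) \<times> insert x0 (insert W S)))\<^sup>*"
    by (simp add: reach_def)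
  then obtain y where y: "(x0, y) \<in> (E \<inter> (insert x0 (insert W S) \<times> insert x0 (insert W S)))\<^sup>*"
      "(y, W) \<in> E"
  proof (rule rtranclE)
    assume "x0 = W" then show ?thesis using assms(2) by simp
  next
    fix y assume "(x0, y) \<in> (E \<inter> (insert x0 (insert W S) \<times> insert x0 (insert W S)))\<^sup>*"
      "(y, W) \<in> E \<inter> (insert x0 (insert W S) \<times> insert x0 (insert W S))"
    then show ?thesis using that by auto
  qed
  have yp: "y \<in> parents E W" using y(2) by (simp add: parents_def)
  have "reach (insert W S) y" using y(1) by (simp add: reach_def)
  then have "reach S y" using reach_ins_low[OF assms par_ord[OF yp]] by simp
  then show "\<exists>u\<in>parents E W. reach S u" using yp by blast
next
  assume "\<exists>u\<in>parents E W. reach S u"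
  then obtain u where u: "u \<in> parents E W" "reach S u" by blast
  have "u \<in> insert x0 S" using reach_in[OF u(2)] .
  moreover have "reach (insert W S) u" using u(2) by (rule reach_mono[rotated]) auto
  ultimately show "reach (insert W S) W"
    using u(1) unfolding reach_def
    by (auto intro: rtrancl_into_rtrancl simp: parents_def)
qed

definition hit :: "'n set \<Rightarrow> 'n set \<Rightarrow> real" where
  "hit S V = (if \<exists>w\<in>V. reach S w then 1 else 0)"

lemma perc_hit: "perc N E x0 p V = (\<Sum>S\<in>Pow (N - {x0}). (\<Prod>v\<in>S. p v) * (\<Prod>v\<in>(N - {x0}) - S. 1 - p v) * hit S V)"
  unfolding perc_def hit_def reach_def ..

abbreviation pc where "pc \<equiv> perc N E x0 eN"

lemma perc_nonneg: "0 \<le> pc V"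
  unfolding perc_hit
  using eN_bounds
  by (intro sum_nonneg mult_nonneg_nonneg prod_nonneg) (auto simp: hit_def)

lemma finM: "finite (N - {x0})" using finN by simp

lemma perc_x0: "x0 \<in> V \<Longrightarrow> pc V = 1"
proof -
  assume "x0 \<in> V"
  then have h: "hit S V = 1" for S by (auto simp: hit_def reach_def)
  have "pc V = (\<Sum>S\<in>Pow (N - {x0}). (\<Prod>v\<in>S. eN v) * (\<Prod>v\<in>(N - {x0}) - S. 1 - eN v))"
    unfolding perc_hit h by simp
  also have "\<dots> = (\<Prod>v\<in>N - {x0}. eN v + (1 - eN v))"
    by (rule prod_add[symmetric]) (rule finM)
  finally show ?thesis by simp
qed

lemma perc_lt:
  assumes "\<forall>v\<in>N - {x0}. eN v < 1" "x0 \<notin> V"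
  shows "pc V < 1"
proof -
  define M where "M = N - {x0}"
  define wt where "wt S = (\<Prod>v\<in>S. eN v) * (\<Prod>v\<in>M - S. 1 - eN v)" for S
  have fM: "finite M" using finM by (simp add: M_def)
  have wt0: "0 \<le> wt S" if "S \<subseteq> M" for S
    unfolding wt_def using eN_bounds that by (intro mult_nonneg_nonneg prod_nonneg) (auto simp: M_def)
  have wte: "wt {} > 0" unfolding wt_def using assms(1) fM
    by (intro mult_pos_pos prod_pos) (auto simp: M_def)
  have tot: "(\<Sum>S\<in>Pow M. wt S) = 1"
  proof -
    have "(\<Sum>S\<in>Pow M. wt S) = (\<Prod>v\<in>M. eN v + (1 - eN v))"
      unfolding wt_def by (rule prod_add[symmetric]) (rule fM)
    then show ?thesis by simp
  qed
  have h0: "hit {} V = 0" using reach_in assms(2) by (auto simp: hit_def)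
  have "pc V = (\<Sum>S\<in>Pow M. wt S * hit S V)" unfolding perc_hit wt_def M_def ..
  also have "\<dots> \<le> (\<Sum>S\<in>Pow M. if S = {} then 0 else wt S)"
    using wt0 h0 by (intro sum_mono) (auto simp: hit_def)
  also have "\<dots> = (\<Sum>S\<in>Pow M - {{}}. wt S)"
  proof -
    have r: "sum g (Pow M) = g {} + sum g (Pow M - {{}})" for g :: "'n set \<Rightarrow> real"
      using fM by (intro sum.remove) auto
    have "(\<Sum>S\<in>Pow M. if S = {} then 0 else wt S) = (\<Sum>S\<in>Pow M - {{}}. if S = {} then 0 else wt S)"
      using r[of "\<lambda>S. if S = {} then 0 else wt S"] by simp
    also have "(\<Sum>S\<in>Pow M - {{}}. if S = {} then 0 else wt S) = (\<Sum>S\<in>Pow M - {{}}. wt S)"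
      by (rule sum.cong) auto
    finally show ?thesis by simp
  qed
  also have "\<dots> = (\<Sum>S\<in>Pow M. wt S) - wt {}"
    using fM by (simp add: sum_diff1)
  finally show ?thesis using tot wte by simp
qed

lemma perc_rec:
  assumes W: "W \<in> N - {x0}" "W \<notin> V" "\<forall>v\<in>V. ord v < ord W"
  shows "pc (insert W V) = eN W * pc (V \<union> parents E W) + (1 - eN W) * pc V"
proof -
  define M' where "M' = N - {x0} - {W}"
  have MM: "N - {x0} = insert W M'" "W \<notin> M'" using W by (auto simp: M'_def)
  have fM': "finite M'" using finM by (simp add: M'_def)
  define w' where "w' S = (\<Prod>v\<in>S. eN v) * (\<Prod>v\<in>M' - S. 1 - eN v)" for S
  have wsplit: "(\<Prod>v\<in>S. eN v) * (\<Prod>v\<in>insert W M' - S. 1 - eN v) * h S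
          + (\<Prod>v\<in>insert W S. eN v) * (\<Prod>v\<in>insert W M' - insert W S. 1 - eN v) * h (insert W S)
        = w' S * ((1 - eN W) * h S + eN W * h (insert W S))" if "S \<in> Pow M'" for S h
  proof -
    have S: "S \<subseteq> M'" "W \<notin> S" using that MM by auto
    have fS: "finite S" using S fM' finite_subset by blast
    have e1: "insert W M' - S = insert W (M' - S)" using S by auto
    have e2: "insert W M' - insert W S = M' - S" using S MM by auto
    have p1: "(\<Prod>v\<in>insert W M' - S. 1 - eN v) = (1 - eN W) * (\<Prod>v\<in>M' - S. 1 - eN v)"
      unfolding e1 using fM' MM by (simp add: prod.insert)
    have p2: "(\<Prod>v\<in>insert W S. eN v) = eN W * (\<Prod>v\<in>S. eN v)"
      using fS S by simp
    show ?thesis unfolding p1 p2 e2 w'_def by (simp add: algebra_simps)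
  qed
  have low: "pc X = (\<Sum>S\<in>Pow M'. w' S * hit S X)" if X: "\<forall>w\<in>X. ord w < ord W" for X
  proof -
    have "pc X = (\<Sum>S\<in>Pow M'. w' S * ((1 - eN W) * hit S X + eN W * hit (insert W S) X))"
      unfolding perc_hit MM(1) sum_Pow_insert[OF fM' MM(2)]
      by (intro sum.cong refl wsplit)
    also have "\<dots> = (\<Sum>S\<in>Pow M'. w' S * hit S X)"
    proof (intro sum.cong refl)
      fix S assume "S \<in> Pow M'"
      then have "W \<notin> S" using MM by auto
      then have "hit (insert W S) X = hit S X"
        using reach_ins_low[of W S] W X by (auto simp: hit_def)
      then show "w' S * ((1 - eN W) * hit S X + eN W * hit (insert W S) X) = w' S * hit S X"
        by (simp add: algebra_simps)
    qed
    finally show ?thesis .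
  qed
  have "pc (insert W V) = (\<Sum>S\<in>Pow M'. w' S * ((1 - eN W) * hit S (insert W V) + eN W * hit (insert W S) (insert W V)))"
    unfolding perc_hit MM(1) sum_Pow_insert[OF fM' MM(2)]
    by (intro sum.cong refl wsplit)
  also have "\<dots> = (\<Sum>S\<in>Pow M'. w' S * ((1 - eN W) * hit S V + eN W * hit S (V \<union> parents E W)))"
  proof (intro sum.cong refl)
    fix S assume "S \<in> Pow M'"
    then have S: "W \<notin> S" using MM by auto
    have Wx: "W \<noteq> x0" using W by auto
    have a: "hit S (insert W V) = hit S V"
      using reach_in[of S W] S Wx by (auto simp: hit_def)
    have b: "hit (insert W S) (insert W V) = hit S (V \<union> parents E W)"
      using reach_ins_W[OF S Wx] reach_ins_low[OF S Wx] W(3) by (auto simp: hit_def)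
    show "w' S * ((1 - eN W) * hit S (insert W V) + eN W * hit (insert W S) (insert W V)) =
          w' S * ((1 - eN W) * hit S V + eN W * hit S (V \<union> parents E W))"
      using a b by simp
  qed
  also have "\<dots> = (\<Sum>S\<in>Pow M'. (1 - eN W) * (w' S * hit S V) + eN W * (w' S * hit S (V \<union> parents E W)))"
    by (intro sum.cong refl) (simp add: algebra_simps)
  also have "\<dots> = (1 - eN W) * (\<Sum>S\<in>Pow M'. w' S * hit S V) + eN W * (\<Sum>S\<in>Pow M'. w' S * hit S (V \<union> parents E W))"
    by (simp only: sum.distrib sum_distrib_left)
  also have "(\<Sum>S\<in>Pow M'. w' S * hit S V) = pc V" using low W(3) by simp
  also have "(\<Sum>S\<in>Pow M'. w' S * hit S (V \<union> parents E W)) = pc (V \<union> parents E W)"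
  proof -
    have "\<forall>w\<in>V \<union> parents E W. ord w < ord W" using W(3) par_ord by auto
    from low[OF this] show ?thesis by simp
  qed
  finally show ?thesis by simp
qed

end

context BN
begin

lemma eS_empty: "eS {} = 0"
proof (rule antisym)
  show "eS {} \<le> 0"
    unfolding eta_set_def
  proof (rule eta_least)
    fix P Q assume P: "is_dist (A x0) P" and Q: "is_dist (A x0) Q" and "abs_cont (A x0) P Q"
    have a: "is_dist (PiE {} A) (push (A x0) (IK {}) P)"
      by (rule push_dist[OF P IK_stoch finPiE]) auto
    have b: "is_dist (PiE {} A) (push (A x0) (IK {}) Q)"
      by (rule push_dist[OF Q IK_stoch finPiE]) auto
    show "kl_div (PiE {} A) (push (A x0) (IK {}) P) (push (A x0) (IK {}) Q) \<le> 0 * kl_div (A x0) P Q"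
      using a b by (simp add: kl_div_fkl is_dist_def)
  qed simp
  show "0 \<le> eS {}" using eS_bounds[of "{}"] by simp
qed

lemma part2: "V \<subseteq> N \<Longrightarrow> eS V \<le> pc V"
proof -
  have main: "\<forall>V. V \<subseteq> N \<longrightarrow> (\<forall>v\<in>V. ord v < n) \<longrightarrow> eS V \<le> pc V" for n
  proof (induction n rule: less_induct)
    case (less n)
    show ?case
    proof (intro allI impI)
      fix V assume V: "V \<subseteq> N" and o: "\<forall>v\<in>V. ord v < n"
      show "eS V \<le> pc V"
      proof (cases "x0 \<in> V")
        case True
        then show ?thesis using perc_x0 eS_bounds[OF V] by simp
      next
        case nx0: False
        show ?thesis
        proof (cases "V = {}")
          case True
          then show ?thesis using eS_empty perc_nonneg by simp
        next
          case False
          have fV: "finite V" using V finN finite_subset by blast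
          have fo: "finite (ord ` V)" "ord ` V \<noteq> {}" using fV False by auto
          obtain W where W1: "W \<in> V" "ord W = Max (ord ` V)"
            using Max_in[OF fo] by auto
          have Wmax: "ord v \<le> ord W" if "v \<in> V" for v
            using W1 Max_ge[OF fo(1)] that by auto
          define V' where "V' = V - {W}"
          have WN: "W \<in> N - {x0}" using W1 V nx0 by auto
          have V'N: "V' \<subseteq> N" using V by (auto simp: V'_def)
          have WV': "W \<notin> V'" by (simp add: V'_def)
          have lt: "\<forall>v\<in>V'. ord v < ord W"
          proof
            fix v assume v: "v \<in> V'"
            then have "v \<noteq> W" "v \<in> V" by (auto simp: V'_def)
            then have "ord v \<noteq> ord W" using injo V W1(1) by (auto dest: inj_onD)
            then show "ord v < ord W" using Wmax[OF \<open>v \<in> V\<close>] by simp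
          qed
          have Wn: "ord W < n" using o W1 by auto
          have IH: "\<forall>V. V \<subseteq> N \<longrightarrow> (\<forall>v\<in>V. ord v < ord W) \<longrightarrow> eS V \<le> pc V"
            by (rule less.IH[OF Wn])
          have i1: "eS (V' \<union> parents E W) \<le> pc (V' \<union> parents E W)"
          proof -
            have s: "V' \<union> parents E W \<subseteq> N" using V'N par_sub by auto
            have "\<forall>v\<in>V' \<union> parents E W. ord v < ord W" using lt par_ord by auto
            then show ?thesis using IH s by blast
          qed
          have i2: "eS V' \<le> pc V'" using IH V'N lt by blast
          have VV: "insert W V' = V" using W1 by (auto simp: V'_def)
          have e01: "0 \<le> eN W" "eN W \<le> 1" using eN_bounds[OF WN] by auto
          have "eS V \<le> eN W * eS (V' \<union> parents E W) + (1 - eN W) * eS V'"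
            using part1[OF WN V'N WV' lt] VV by simp
          also have "\<dots> \<le> eN W * pc (V' \<union> parents E W) + (1 - eN W) * pc V'"
            using i1 i2 e01 by (intro add_mono mult_left_mono) auto
          also have "\<dots> = pc V" using perc_rec[OF WN WV' lt] VV by simp
          finally show ?thesis .
        qed
      qed
    qed
  qed
  assume V: "V \<subseteq> N"
  have "\<forall>v\<in>V. ord v < Suc (Max (ord ` N))"
    using V finN by (auto simp: less_Suc_eq_le intro!: Max_ge)
  then show ?thesis using main V by blast
qed

end

theorem theorem5:
  fixes N :: "'n set" and E :: "('n \<times> 'n) set" and x0 :: 'n
    and A :: "'n \<Rightarrow> 'a set" and K :: "'n \<Rightarrow> ('n \<Rightarrow> 'a) \<Rightarrow> 'a \<Rightarrow> real"
    and ord :: "'n \<Rightarrow> nat"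
  assumes bn: "bayes_net N E x0 A K ord"
  shows "(\<forall>W V. W \<in> N \<and> V \<subseteq> N \<and> W \<notin> V \<and> W \<noteq> x0 \<and> (\<forall>v\<in>V. ord v < ord W) \<longrightarrow>
           eta_set N E x0 A K (insert W V)
             \<le> eta_node E A K W * eta_set N E x0 A K (V \<union> parents E W)
               + (1 - eta_node E A K W) * eta_set N E x0 A K V)
       \<and> (\<forall>V. V \<subseteq> N \<longrightarrow> eta_set N E x0 A K V \<le> perc N E x0 (eta_node E A K) V)
       \<and> ((\<forall>v\<in>N - {x0}. eta_node E A K v < 1) \<longrightarrow>
           (\<forall>V. V \<subseteq> N \<and> x0 \<notin> V \<longrightarrow> eta_set N E x0 A K V < 1))"
proof -
  interpret BN N E x0 A K ord by unfold_locales (rule bn)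
  show ?thesis
  proof (intro conjI allI impI)
    fix W V
    assume h: "W \<in> N \<and> V \<subseteq> N \<and> W \<notin> V \<and> W \<noteq> x0 \<and> (\<forall>v\<in>V. ord v < ord W)"
    then show "eta_set N E x0 A K (insert W V)
             \<le> eta_node E A K W * eta_set N E x0 A K (V \<union> parents E W)
               + (1 - eta_node E A K W) * eta_set N E x0 A K V"
      by (intro part1) auto
  next
    fix V assume "V \<subseteq> N"
    then show "eta_set N E x0 A K V \<le> perc N E x0 (eta_node E A K) V" by (rule part2)
  next
    fix V assume h1: "\<forall>v\<in>N - {x0}. eta_node E A K v < 1" and h2: "V \<subseteq> N \<and> x0 \<notin> V"
    have "eta_set N E x0 A K V \<le> perc N E x0 (eta_node E A K) V" using h2 by (intro part2) auto
    also have "\<dots> < 1" using perc_lt h1 h2 by auto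
    finally show "eta_set N E x0 A K V < 1" .
  qed
qed

end
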